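(* Let $A\in\mathbb{R}^{n\times d}$, $k\ge1$. Let $\mathbf{S}\in\mathbb{R}^{m\times d}$ be a random matrix such that with probability at least $9/10$, $\min_{\mathrm{rank}(X)\le k}\|A\mathbf{S}^{\mathsf T}X-A\|_{1,2}\le\frac32\mathrm{SubApx}_{k,1}(A)$. Let $\mathbf{L}$ be a random matrix with $n$ columns such that, with probability at least $9/10$, $\alpha\|A\mathbf{S}^{\mathsf T}y\|_1\le\|\mathbf{L}A\mathbf{S}^{\mathsf T}y\|_1\le\beta\|A\mathbf{S}^{\mathsf T}y\|_1$ for all vectors $y$ (where $0<\alpha\le\beta$), and such that, conditionally on $\mathbf{S}$, $\mathbb{E}_{\mathbf{L}}[\|\mathbf{L}M\|_{1,2}]=\|M\|_{1,2}$ for every fixed matrix $M$ with $n$ rows. Then with probability at least $3/5$, every matrix $X\in\mathbb{R}^{m\times d}$ with $\|\mathbf{L}A\mathbf{S}^{\mathsf T}X-\mathbf{L}A\|_{1,2}\le10\,\mathrm{SubApx}_{k,1}(A)$ satisfies $$\|A\mathbf{S}^{\mathsf T}X-A\|_{1,2}\le(2+40/\alpha)\,\mathrm{SubApx}_{k,1}(A).$$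
   Context: $\|M\|_{1,2}=\sum_i\|M_{i*}\|_2$ (sum of Euclidean norms of rows). $\mathrm{SubApx}_{k,1}(A)=\min\{\sum_i\mathrm{dist}(A_{i*},Q):Q\text{ linear subspace of }\mathbb{R}^d,\dim Q\le k\}$, where $\mathrm{dist}(x,Q)=\min_{q\in Q}\|x-q\|_2$. *)

theory Defs
  imports "HOL-Probability.Probability"
begin

definition norm12 :: "real^'c^'r \<Rightarrow> real" where
  "norm12 M = (\<Sum>i\<in>UNIV. norm (M $ i))"

definition norm1 :: "real^'r \<Rightarrow> real" where
  "norm1 v = (\<Sum>i\<in>UNIV. \<bar>v $ i\<bar>)"

text \<open>SubApx_{k,1}(A): best sum of distances of the rows of A to a linear subspace of
  dimension at most k (the minimum is attained; we write it as an infimum).\<close>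
definition SubApx :: "nat \<Rightarrow> real^'d^'n \<Rightarrow> real" where
  "SubApx k A = Inf {(\<Sum>i\<in>UNIV. infdist (A $ i) Q) | Q. subspace Q \<and> dim Q \<le> k}"

definition rank_k_cost :: "nat \<Rightarrow> real^'d^'n \<Rightarrow> real^'d^'m \<Rightarrow> real" where
  "rank_k_cost k A S = Inf {norm12 (A ** transpose S ** X - A) | X :: real^'d^'m. rank X \<le> k}"

end

theory Submission
  imports Defs
begin


definition Gd :: "real measure" where "Gd = density lborel std_normal_density"
definition GG :: "('d \<Rightarrow> real) measure" where "GG = PiM UNIV (\<lambda>_. Gd)"

lemma prob_Gd: "prob_space Gd" unfolding Gd_def by (rule prob_space_normal_density) simp

lemma prob_GG: "prob_space (GG :: ('d::finite \<Rightarrow> real) measure)"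
  unfolding GG_def by (intro prob_space_PiM prob_Gd)

lemma sets_Gd[simp, measurable_cong]: "sets Gd = sets borel" unfolding Gd_def by simp

lemma coord_distr: "distributed (GG :: ('d::finite \<Rightarrow> real) measure) lborel (\<lambda>g. g i) std_normal_density"
proof -
  have "distr GG lborel (\<lambda>g. g i) = distr GG Gd (\<lambda>g. g i)"
    by (rule distr_cong) auto
  also have "\<dots> = Gd" unfolding GG_def by (rule distr_PiM_component) (auto intro: prob_Gd)
  finally show ?thesis unfolding distributed_def Gd_def GG_def by auto
qed

lemma coord_indep: "prob_space.indep_vars (GG :: ('d::finite \<Rightarrow> real) measure) (\<lambda>_. borel) (\<lambda>i g. g i) UNIV"
proof -
  interpret prob_space "GG :: ('d \<Rightarrow> real) measure" by (rule prob_GG)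
  have "distr (GG::('d \<Rightarrow> real) measure) (\<Pi>\<^sub>M i\<in>UNIV. borel) (\<lambda>x. \<lambda>i\<in>UNIV. x i) = (\<Pi>\<^sub>M i\<in>(UNIV::'d set). distr (GG::('d \<Rightarrow> real) measure) borel (\<lambda>g. g i))"
  proof -
    have E: "(\<lambda>i. distr (GG::('d \<Rightarrow> real) measure) borel (\<lambda>g. g i)) = (\<lambda>_. Gd)"
    proof
      fix i
      have "distr (GG::('d \<Rightarrow> real) measure) borel (\<lambda>g. g i) = distr (GG::('d \<Rightarrow> real) measure) Gd (\<lambda>g. g i)" by (rule distr_cong) auto
      also have "\<dots> = Gd" unfolding GG_def by (rule distr_PiM_component) (auto intro: prob_Gd)
      finally show "distr (GG::('d \<Rightarrow> real) measure) borel (\<lambda>g. g i) = Gd" .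
    qed
    moreover have E2: "distr (GG::('d \<Rightarrow> real) measure) (\<Pi>\<^sub>M i\<in>UNIV. borel) (\<lambda>x. \<lambda>i\<in>UNIV. x i) = (GG::('d \<Rightarrow> real) measure)"
    proof -
      have "distr (GG::('d \<Rightarrow> real) measure) (\<Pi>\<^sub>M i\<in>UNIV. borel) (\<lambda>x. \<lambda>i\<in>UNIV. x i) = distr (GG::('d \<Rightarrow> real) measure) GG (\<lambda>x. x)"
        by (rule distr_cong) (auto simp: GG_def intro!: sets_PiM_cong)
      then show ?thesis by simp
    qed
    moreover have E3: "PiM UNIV (\<lambda>i. distr (GG::('d \<Rightarrow> real) measure) borel (\<lambda>g. g i)) = (GG::('d \<Rightarrow> real) measure)" by (subst E) (simp add: GG_def)
    show ?thesis by (rule trans[OF E2 E3[symmetric]])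
  qed
  then show ?thesis by (subst indep_vars_iff_distr_eq_PiM) (auto simp: GG_def)
qed


lemma norm_vec_sq: "norm (z::real^'d::finite) = sqrt (\<Sum>j\<in>UNIV. (z$j)^2)"
  by (simp add: norm_vec_def L2_set_def)

lemma gauss_abs:
  fixes z :: "real^'d::finite"
  shows "integrable (GG :: ('d \<Rightarrow> real) measure) (\<lambda>g. \<bar>\<Sum>j\<in>UNIV. z$j * g j\<bar>) \<and>
         (\<integral>g. \<bar>\<Sum>j\<in>UNIV. z$j * g j\<bar> \<partial>(GG :: ('d \<Rightarrow> real) measure)) = sqrt (2/pi) * norm z"
proof (cases "z = 0")
  case True
  then show ?thesis by simp
next
  case False
  interpret prob_space "GG :: ('d \<Rightarrow> real) measure" by (rule prob_GG)
  define I where "I = {j. z$j \<noteq> 0}"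
  have I: "finite I" "I \<noteq> {}" using False by (auto simp: I_def vec_eq_iff)
  have sumI: "(\<Sum>j\<in>UNIV. z$j * g j) = (\<Sum>j\<in>I. z$j * g j)" for g :: "'d \<Rightarrow> real"
    by (rule sum.mono_neutral_right) (auto simp: I_def)
  have sqI: "(\<Sum>j\<in>UNIV. (z$j)^2) = (\<Sum>j\<in>I. (\<bar>z$j\<bar>)^2)"
    by (simp, rule sum.mono_neutral_right) (auto simp: I_def)
  have ind: "indep_vars (\<lambda>_. borel) (\<lambda>j g. z$j * (\<lambda>g. g j) g) I"
    by (rule indep_vars_compose2[OF indep_vars_subset[OF coord_indep]]) auto
  have dj: "distributed GG lborel (\<lambda>g. z$j * g j) (normal_density 0 \<bar>z$j\<bar>)" if "j \<in> I" for j
  proof -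
    have "distributed GG lborel (\<lambda>g. 0 + z$j * g j) (normal_density (0 + z$j * 0) (\<bar>z$j\<bar> * 1))"
      by (rule normal_density_affine[OF coord_distr]) (use that in \<open>auto simp: I_def\<close>)
    then show ?thesis by simp
  qed
  have D: "distributed GG lborel (\<lambda>g. \<Sum>j\<in>I. z$j * g j) (normal_density 0 (norm z))"
  proof -
    have "distributed GG lborel (\<lambda>g. \<Sum>j\<in>I. z$j * g j) (normal_density (\<Sum>j\<in>I. 0) (sqrt (\<Sum>j\<in>I. (\<bar>z$j\<bar>)^2)))"
      by (rule sum_indep_normal[OF I ind]) (auto simp: I_def dj)
    then show ?thesis by (simp add: norm_vec_sq sqI)
  qed
  have int1: "integrable lborel (\<lambda>x. normal_density 0 (norm z) x * \<bar>x\<bar>)"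
    using integrable_normal_moment_abs[where k=1 and \<mu>=0 and \<sigma>="norm z"] False by simp
  have "integrable GG (\<lambda>g. \<bar>\<Sum>j\<in>I. z$j * g j\<bar>)"
    using distributed_integrable[OF D, of abs] int1 by simp
  moreover have "(\<integral>g. \<bar>\<Sum>j\<in>I. z$j * g j\<bar> \<partial>GG) = sqrt (2/pi) * norm z"
  proof -
    have "(\<integral>g. \<bar>\<Sum>j\<in>I. z$j * g j\<bar> \<partial>GG) = (\<integral>x. normal_density 0 (norm z) x * \<bar>x\<bar> \<partial>lborel)"
      using distributed_integral[OF D, of abs] by simp
    also have "\<dots> = sqrt (2/pi) * norm z"
      using integral_normal_moment_abs_odd[where k=0 and \<mu>=0 and \<sigma>="norm z"] False by simp
    finally show ?thesis .
  qed
  ultimately show ?thesis by (simp add: sumI)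
qed


lemma gauss_rep:
  fixes Z :: "real^'d::finite^'p::finite"
  shows "integrable (GG :: ('d \<Rightarrow> real) measure) (\<lambda>g. norm1 (Z *v (\<chi> j. g j))) \<and>
         (\<integral>g. norm1 (Z *v (\<chi> j. g j)) \<partial>(GG :: ('d \<Rightarrow> real) measure)) = sqrt (2/pi) * norm12 Z"
proof -
  have eq: "norm1 (Z *v (\<chi> j. g j)) = (\<Sum>i\<in>UNIV. \<bar>\<Sum>j\<in>UNIV. (Z$i)$j * g j\<bar>)" for g :: "'d \<Rightarrow> real"
    by (simp add: norm1_def matrix_vector_mult_def)
  have ii: "integrable (GG :: ('d \<Rightarrow> real) measure) (\<lambda>g. \<bar>\<Sum>j\<in>UNIV. (Z$i)$j * g j\<bar>)" for i
    using gauss_abs[of "Z$i"] by blast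
  show ?thesis
    unfolding eq
    using gauss_abs[of "Z$i" for i]
    by (simp add: ii norm12_def sum_distrib_left)
qed

lemma transfer12:
  fixes W :: "real^'m::finite^'n::finite" and L :: "real^'n^'r::finite" and Y :: "real^'d::finite^'m"
  assumes "\<And>y. \<alpha> * norm1 (W *v y) \<le> norm1 ((L ** W) *v y)"
  shows "\<alpha> * norm12 (W ** Y) \<le> norm12 (L ** W ** Y)"
proof -
  let ?c = "sqrt (2/pi)"
  have c: "?c > 0" by simp
  let ?v = "\<lambda>g::'d \<Rightarrow> real. (\<chi> j. g j)"
  note R1 = gauss_rep[of "W ** Y"] and R2 = gauss_rep[of "L ** W ** Y"]
  have "?c * (\<alpha> * norm12 (W ** Y)) = \<alpha> * (\<integral>g. norm1 ((W ** Y) *v ?v g) \<partial>GG)"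
    using R1 by simp
  also have "\<dots> = (\<integral>g. \<alpha> * norm1 ((W ** Y) *v ?v g) \<partial>GG)" by simp
  also have "\<dots> \<le> (\<integral>g. norm1 ((L ** W ** Y) *v ?v g) \<partial>GG)"
  proof (rule integral_mono)
    show "integrable GG (\<lambda>g. \<alpha> * norm1 ((W ** Y) *v ?v g))" using R1 by simp
    show "integrable GG (\<lambda>g. norm1 ((L ** W ** Y) *v ?v g))" using R2 by simp
    fix g :: "'d \<Rightarrow> real"
    show "\<alpha> * norm1 ((W ** Y) *v ?v g) \<le> norm1 ((L ** W ** Y) *v ?v g)"
      using assms[of "Y *v ?v g"] by (simp add: matrix_vector_mul_assoc)
  qed
  also have "\<dots> = ?c * norm12 (L ** W ** Y)" using R2 by simp
  finally show ?thesis using c by simp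
qed




lemma cont_mm[continuous_intros]:
  "continuous_on S f \<Longrightarrow> continuous_on S g \<Longrightarrow> continuous_on S (\<lambda>x. (f x :: real^'n::finite^'m::finite) ** (g x :: real^'p::finite^'n))"
  unfolding matrix_matrix_mult_def by (intro continuous_intros)

lemma cont_transpose[continuous_intros]:
  "continuous_on S f \<Longrightarrow> continuous_on S (\<lambda>x. transpose (f x :: real^'n::finite^'m::finite))"
  unfolding transpose_def by (intro continuous_intros)

lemma cont_norm12[continuous_intros]:
  "continuous_on S f \<Longrightarrow> continuous_on S (\<lambda>x. norm12 (f x :: real^'n::finite^'m::finite))"
  unfolding norm12_def by (intro continuous_intros)

lemma meas1:
  fixes A :: "real^'d::finite^'n::finite" and S :: "'a \<Rightarrow> real^'d^'m::finite" and X :: "real^'d^'m"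
  assumes "S \<in> borel_measurable M"
  shows "(\<lambda>\<omega>. norm12 (A ** transpose (S \<omega>) ** X - A)) \<in> borel_measurable M"
  by (rule borel_measurable_continuous_on[OF _ assms]) (intro continuous_intros)

lemma meas2:
  fixes A :: "real^'d::finite^'n::finite" and S :: "'a \<Rightarrow> real^'d^'m::finite" and X :: "real^'d^'m"
    and L :: "'a \<Rightarrow> 'b \<Rightarrow> real^'n^'r::finite"
  assumes "S \<in> borel_measurable M" "(\<lambda>(\<omega>1, \<omega>2). L \<omega>1 \<omega>2) \<in> borel_measurable (M \<Otimes>\<^sub>M N)"
  shows "(\<lambda>p. norm12 (L (fst p) (snd p) ** (A ** transpose (S (fst p)) ** X - A))) \<in> borel_measurable (M \<Otimes>\<^sub>M N)"
proof -
  have h: "(\<lambda>p. (S (fst p), L (fst p) (snd p))) \<in> borel_measurable (M \<Otimes>\<^sub>M N)"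
  proof (rule borel_measurable_Pair)
    show "(\<lambda>p. S (fst p)) \<in> borel_measurable (M \<Otimes>\<^sub>M N)" using assms(1) by measurable
    show "(\<lambda>p. L (fst p) (snd p)) \<in> borel_measurable (M \<Otimes>\<^sub>M N)"
      using assms(2) by (simp add: case_prod_beta')
  qed
  have "(\<lambda>p. (\<lambda>q. norm12 (snd q ** (A ** transpose (fst q) ** X - A))) (S (fst p), L (fst p) (snd p))) \<in> borel_measurable (M \<Otimes>\<^sub>M N)"
    by (rule borel_measurable_continuous_on[OF _ h]) (intro continuous_intros)
  then show ?thesis by simp
qed




lemma SubApx_nonneg: "0 \<le> SubApx k (A :: real^'d::finite^'n::finite)"
  unfolding SubApx_def
proof (rule cInf_greatest)
  show "{\<Sum>i\<in>UNIV. infdist (A $ i) Q |Q. subspace Q \<and> dim Q \<le> k} \<noteq> {}"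
  proof -
    have "subspace {0::real^'d}" "dim {0::real^'d} \<le> k" by (auto simp: subspace_0)
    then show ?thesis by blast
  qed
qed (auto intro!: sum_nonneg infdist_nonneg)

lemma norm12_nonneg: "0 \<le> norm12 M" unfolding norm12_def by (auto intro!: sum_nonneg)

lemma norm12_triangle: "norm12 (P + Q) \<le> norm12 P + norm12 Q"
  unfolding norm12_def by (simp add: sum.distrib[symmetric] sum_mono norm_triangle_ineq)

lemma norm12_triangle_diff: "norm12 (P - Q) \<le> norm12 P + norm12 Q"
  unfolding norm12_def by (simp add: sum.distrib[symmetric] sum_mono norm_triangle_ineq4)

lemma matrix_diff_ldistrib: "(A::real^'n::finite^'m::finite) ** (B - C) = A ** B - A ** (C::real^'p::finite^'n)"
  by (vector matrix_matrix_mult_def sum_subtractf[symmetric] field_simps)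

lemma rank_cost_approx:
  fixes A :: "real^'d::finite^'n::finite" and S :: "real^'d^'m::finite"
  assumes "rank_k_cost k A S < c"
  shows "\<exists>X. norm12 (A ** transpose S ** X - A) < c"
proof -
  have ne: "{norm12 (A ** transpose S ** X - A) | X :: real^'d^'m. rank X \<le> k} \<noteq> {}"
  proof -
    have "rank (0::real^'d^'m) \<le> k" by simp
    then show ?thesis by blast
  qed
  from cInf_lessD[OF ne assms[unfolded rank_k_cost_def]] show ?thesis by blast
qed

lemma final_bound:
  fixes a SA \<alpha> :: real
  assumes "\<alpha> > 0" "SA \<ge> 0"
    and "\<And>j. a \<le> (10*SA + 10*(3/2*SA + 1/real(Suc j)))/\<alpha> + (3/2*SA + 1/real(Suc j))"
  shows "a \<le> (2 + 40/\<alpha>) * SA"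
proof -
  let ?B = "25*SA/\<alpha> + 3/2*SA"
  have eq0: "(10*SA + 10*(3/2*SA + t))/\<alpha> + (3/2*SA + t) = ?B + (10/\<alpha> + 1) * t" for t
    using assms(1) by (simp add: field_simps)
  have eq: "(10*SA + 10*(3/2*SA + 1/real(Suc j)))/\<alpha> + (3/2*SA + 1/real(Suc j)) = ?B + (10/\<alpha> + 1) * inverse (real (Suc j))" for j
    using eq0[of "1/real(Suc j)"] by (simp add: inverse_eq_divide)
  have lim: "(\<lambda>j. ?B + (10/\<alpha> + 1) * inverse (real (Suc j))) \<longlonglongrightarrow> ?B + (10/\<alpha> + 1) * 0"
    by (intro tendsto_intros LIMSEQ_inverse_real_of_nat)
  have "a \<le> ?B + (10/\<alpha> + 1) * 0"
  proof (rule LIMSEQ_le_const[OF lim], intro exI allI impI)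
    fix n :: nat
    show "a \<le> ?B + (10/\<alpha> + 1) * inverse (real (Suc n))"
      using assms(3)[of n] unfolding eq[of n] .
  qed
  also have "\<dots> \<le> (2 + 40/\<alpha>) * SA"
  proof -
    have "25*SA/\<alpha> \<le> 40*SA/\<alpha>" using assms by (intro divide_right_mono) auto
    then show ?thesis using assms by (simp add: field_simps)
  qed
  finally show ?thesis .
qed




lemma section_bound:
  fixes L :: "'a \<Rightarrow> 'b \<Rightarrow> real^'n::finite^'r::finite" and P :: "real^'d::finite^'n"
  assumes N: "prob_space N" and w: "\<omega>1 \<in> space M"
    and Lm: "(\<lambda>(a, b). L a b) \<in> borel_measurable (M \<Otimes>\<^sub>M N)"
    and I: "(\<integral>\<^sup>+\<omega>2. ennreal (norm12 (L \<omega>1 \<omega>2 ** P)) \<partial>N) = ennreal (norm12 P)"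
    and c: "norm12 P < c"
  shows "measure N {\<omega>2 \<in> space N. norm12 (L \<omega>1 \<omega>2 ** P) < 10*c} \<ge> 9/10"
proof -
  interpret N: prob_space N by (rule N)
  have "(\<lambda>p. (\<lambda>Q. norm12 (Q ** P)) ((\<lambda>(a, b). L a b) p)) \<in> borel_measurable (M \<Otimes>\<^sub>M N)"
    by (rule borel_measurable_continuous_on[OF _ Lm]) (intro continuous_intros)
  from measurable_Pair2[OF this w]
  have meas[measurable]: "(\<lambda>\<omega>2. norm12 (L \<omega>1 \<omega>2 ** P)) \<in> borel_measurable N" by simp
  have int: "integrable N (\<lambda>\<omega>2. norm12 (L \<omega>1 \<omega>2 ** P))"
    by (rule integrableI_nonneg) (auto simp: I norm12_nonneg)
  have ival: "(\<integral>\<omega>2. norm12 (L \<omega>1 \<omega>2 ** P) \<partial>N) = norm12 P"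
    by (subst integral_eq_nn_integral) (auto simp: I norm12_nonneg)
  have c0: "0 < c" using c norm12_nonneg[of P] by linarith
  have mk: "measure N {\<omega>2 \<in> space N. norm12 (L \<omega>1 \<omega>2 ** P) \<ge> 10*c} \<le> norm12 P / (10*c)"
    using integral_Markov_inequality_measure[OF int, of "space N" "10*c"] c0 ival
    by (auto simp: norm12_nonneg)
  also have "\<dots> \<le> 1/10" using c c0 by (simp add: field_simps)
  finally have mk': "measure N {\<omega>2 \<in> space N. norm12 (L \<omega>1 \<omega>2 ** P) \<ge> 10*c} \<le> 1/10" .
  have "{\<omega>2 \<in> space N. norm12 (L \<omega>1 \<omega>2 ** P) < 10*c} = space N - {\<omega>2 \<in> space N. norm12 (L \<omega>1 \<omega>2 ** P) \<ge> 10*c}"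
    by auto
  moreover have "{\<omega>2 \<in> space N. norm12 (L \<omega>1 \<omega>2 ** P) \<ge> 10*c} \<in> sets N" by measurable
  ultimately show ?thesis using N.prob_compl mk' by auto
qed




theorem lemma2:
  fixes A :: "real^'d^'n" and k :: nat and \<alpha> \<beta> :: real
    and M :: "'a measure" and N :: "'b measure"
    and S :: "'a \<Rightarrow> real^'d^'m"
    and L :: "'a \<Rightarrow> 'b \<Rightarrow> real^'n^'r"
  assumes "k \<ge> 1"
    and "0 < \<alpha>" and "\<alpha> \<le> \<beta>"
    and "prob_space M" and "prob_space N"
    and "S \<in> borel_measurable M"
    and "(\<lambda>(\<omega>1, \<omega>2). L \<omega>1 \<omega>2) \<in> borel_measurable (M \<Otimes>\<^sub>M N)"
    and "\<exists>E\<in>sets M. measure M E \<ge> 9/10 \<and>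
           (\<forall>\<omega>\<in>E. rank_k_cost k A (S \<omega>) \<le> 3/2 * SubApx k A)"
    and "\<exists>E\<in>sets (M \<Otimes>\<^sub>M N). measure (M \<Otimes>\<^sub>M N) E \<ge> 9/10 \<and>
           (\<forall>(\<omega>1, \<omega>2)\<in>E. \<forall>y :: real^'m.
              \<alpha> * norm1 ((A ** transpose (S \<omega>1)) *v y)
                \<le> norm1 ((L \<omega>1 \<omega>2 ** A ** transpose (S \<omega>1)) *v y) \<and>
              norm1 ((L \<omega>1 \<omega>2 ** A ** transpose (S \<omega>1)) *v y)
                \<le> \<beta> * norm1 ((A ** transpose (S \<omega>1)) *v y))"
    and "\<forall>\<omega>1\<in>space M. \<forall>P :: real^'d^'n.
           (\<integral>\<^sup>+ \<omega>2. ennreal (norm12 (L \<omega>1 \<omega>2 ** P)) \<partial>N) = ennreal (norm12 P)"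
  shows "\<exists>E\<in>sets (M \<Otimes>\<^sub>M N). measure (M \<Otimes>\<^sub>M N) E \<ge> 3/5 \<and>
           (\<forall>(\<omega>1, \<omega>2)\<in>E. \<forall>X :: real^'d^'m.
              norm12 (L \<omega>1 \<omega>2 ** A ** transpose (S \<omega>1) ** X - L \<omega>1 \<omega>2 ** A)
                \<le> 10 * SubApx k A \<longrightarrow>
              norm12 (A ** transpose (S \<omega>1) ** X - A) \<le> (2 + 40 / \<alpha>) * SubApx k A)"
proof -
  note Sm = assms(6) and Lm = assms(7)
  define SA where "SA = SubApx k A"
  have SA0: "0 \<le> SA" unfolding SA_def by (rule SubApx_nonneg)
  obtain E1 where E1: "E1 \<in> sets M" "measure M E1 \<ge> 9/10"
    "\<And>\<omega>. \<omega> \<in> E1 \<Longrightarrow> rank_k_cost k A (S \<omega>) \<le> 3/2 * SA"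
    using assms(8) unfolding SA_def by blast
  obtain E2 where E2: "E2 \<in> sets (M \<Otimes>\<^sub>M N)" "measure (M \<Otimes>\<^sub>M N) E2 \<ge> 9/10"
    "\<And>\<omega>1 \<omega>2 y. (\<omega>1, \<omega>2) \<in> E2 \<Longrightarrow> \<alpha> * norm1 ((A ** transpose (S \<omega>1)) *v y)
                \<le> norm1 ((L \<omega>1 \<omega>2 ** A ** transpose (S \<omega>1)) *v y)"
    using assms(9) by fast
  interpret M: prob_space M by (rule assms(4))
  interpret N: prob_space N by (rule assms(5))
  interpret P: pair_prob_space M N
    by (simp add: pair_prob_space_def pair_sigma_finite_def M.prob_space_axioms N.prob_space_axioms
        M.sigma_finite_measure_axioms N.sigma_finite_measure_axioms)
  obtain D :: "(real^'d^'m) set" where D: "countable D" "\<And>U. open U \<Longrightarrow> U \<noteq> {} \<Longrightarrow> \<exists>d\<in>D. d \<in> U"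
    using countable_dense_exists by blast
  define c where "c j = 3/2*SA + 1/real(Suc j)" for j :: nat
  have c0: "c j > 0" for j unfolding c_def using SA0 by (simp add: add_nonneg_pos)
  define phi1 where "phi1 X \<omega> = norm12 (A ** transpose (S \<omega>) ** X - A)" for X \<omega>
  define phi2 where "phi2 X p = norm12 (L (fst p) (snd p) ** (A ** transpose (S (fst p)) ** X - A))" for X p
  have [measurable]: "phi1 X \<in> borel_measurable M" for X
    unfolding phi1_def[abs_def] by (rule meas1[OF Sm])
  have [measurable]: "phi2 X \<in> borel_measurable (M \<Otimes>\<^sub>M N)" for X
    unfolding phi2_def[abs_def] by (rule meas2[OF Sm Lm])
  define F where "F j = (\<Union>X\<in>D. {p \<in> space (M \<Otimes>\<^sub>M N). phi1 X (fst p) < c j \<and> phi2 X p \<le> 10 * c j})" for j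
  have Fsets: "F j \<in> sets (M \<Otimes>\<^sub>M N)" for j
    unfolding F_def by (intro sets.countable_UN'' D(1)) measurable
  have Fdec: "decseq F"
  proof (rule decseq_SucI)
    fix j
    have "c (Suc j) \<le> c j" unfolding c_def by (simp add: frac_le)
    then show "F (Suc j) \<subseteq> F j" unfolding F_def by fastforce
  qed
  have Fmeas: "measure (M \<Otimes>\<^sub>M N) (F j) \<ge> 81/100" for j
  proof -
    have sec: "emeasure N (Pair \<omega>1 -` F j) \<ge> ennreal (9/10)" if w: "\<omega>1 \<in> E1" for \<omega>1
    proof -
      have w': "\<omega>1 \<in> space M" using w E1(1) sets.sets_into_space by blast
      have "0 < 1/real(Suc j)" by simp
      then have "rank_k_cost k A (S \<omega>1) < c j" using E1(3)[OF w] unfolding c_def by linarith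
      then obtain X0 where "phi1 X0 \<omega>1 < c j" using rank_cost_approx unfolding phi1_def by blast
      moreover have "open {X. phi1 X \<omega>1 < c j}"
        unfolding phi1_def by (intro open_Collect_less continuous_intros)
      ultimately obtain X where X: "X \<in> D" "phi1 X \<omega>1 < c j" using D(2) by blast
      have "measure N {\<omega>2 \<in> space N. norm12 (L \<omega>1 \<omega>2 ** (A ** transpose (S \<omega>1) ** X - A)) < 10 * c j} \<ge> 9/10"
        by (rule section_bound[OF assms(5) w' Lm]) (use assms(10) w' X(2) in \<open>auto simp: phi1_def\<close>)
      also have "\<dots> \<le> measure N (Pair \<omega>1 -` F j)"
      proof (rule N.finite_measure_mono)
        show "Pair \<omega>1 -` F j \<in> sets N" using Fsets by (rule sets_Pair1)
        show "{\<omega>2 \<in> space N. norm12 (L \<omega>1 \<omega>2 ** (A ** transpose (S \<omega>1) ** X - A)) < 10 * c j} \<subseteq> Pair \<omega>1 -` F j"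
          using X w' unfolding F_def phi1_def phi2_def by (force simp: space_pair_measure)
      qed
      finally show ?thesis by (simp add: N.emeasure_eq_measure ennreal_leI)
    qed
    have "emeasure (M \<Otimes>\<^sub>M N) (F j) = (\<integral>\<^sup>+\<omega>1. emeasure N (Pair \<omega>1 -` F j) \<partial>M)"
      by (rule N.emeasure_pair_measure_alt[OF Fsets])
    also have "\<dots> \<ge> (\<integral>\<^sup>+\<omega>1. ennreal (9/10) * indicator E1 \<omega>1 \<partial>M)"
      by (intro nn_integral_mono) (auto split: split_indicator intro: sec)
    also have "(\<integral>\<^sup>+\<omega>1. ennreal (9/10) * indicator E1 \<omega>1 \<partial>M) = ennreal (9/10) * emeasure M E1"
      using E1(1) by (simp add: nn_integral_cmult_indicator)
    finally have "ennreal (9/10 * measure M E1) \<le> emeasure (M \<Otimes>\<^sub>M N) (F j)"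
      by (simp add: M.emeasure_eq_measure ennreal_mult'' [symmetric])
    then have "9/10 * measure M E1 \<le> measure (M \<Otimes>\<^sub>M N) (F j)"
      by (simp add: P.emeasure_eq_measure)
    moreover have "81/100 \<le> 9/10 * measure M E1" using E1(2) by simp
    ultimately show ?thesis by linarith
  qed
  have Fint: "measure (M \<Otimes>\<^sub>M N) (\<Inter>j. F j) \<ge> 81/100"
  proof (rule LIMSEQ_le_const[OF P.finite_Lim_measure_decseq])
    show "range F \<subseteq> sets (M \<Otimes>\<^sub>M N)" using Fsets by auto
    show "decseq F" by (rule Fdec)
    show "\<exists>K0. \<forall>n\<ge>K0. 81/100 \<le> measure (M \<Otimes>\<^sub>M N) (F n)" using Fmeas by auto
  qed
  have Fi_sets: "(\<Inter>j. F j) \<in> sets (M \<Otimes>\<^sub>M N)" using Fsets by auto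
  define E where "E = E2 \<inter> (\<Inter>j. F j)"
  show ?thesis
  proof (intro bexI conjI)
    show "E \<in> sets (M \<Otimes>\<^sub>M N)" unfolding E_def using E2(1) Fi_sets by auto
    show "measure (M \<Otimes>\<^sub>M N) E \<ge> 3/5"
    proof -
      have "measure (M \<Otimes>\<^sub>M N) (E2 \<union> (\<Inter>j. F j)) \<le> 1" by (rule P.prob_le_1)
      moreover have "measure (M \<Otimes>\<^sub>M N) (E2 \<union> (\<Inter>j. F j)) + measure (M \<Otimes>\<^sub>M N) E
          = measure (M \<Otimes>\<^sub>M N) E2 + measure (M \<Otimes>\<^sub>M N) (\<Inter>j. F j)"
        unfolding E_def using P.finite_measure_Union'[OF E2(1) Fi_sets] P.finite_measure_Diff'[OF Fi_sets E2(1)]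
        by (simp add: Int_commute)
      ultimately show ?thesis using E2(2) Fint by linarith
    qed
    have main: "norm12 (A ** transpose (S \<omega>1) ** X - A) \<le> (2 + 40 / \<alpha>) * SubApx k A"
      if inE: "(\<omega>1, \<omega>2) \<in> E"
      and H: "norm12 (L \<omega>1 \<omega>2 ** A ** transpose (S \<omega>1) ** X - L \<omega>1 \<omega>2 ** A) \<le> 10 * SubApx k A"
      for \<omega>1 \<omega>2 and X :: "real^'d^'m"
    proof -
      define Wm where "Wm = A ** transpose (S \<omega>1)"
      define Lm where "Lm = L \<omega>1 \<omega>2"
      have H': "norm12 (Lm ** Wm ** X - Lm ** A) \<le> 10 * SA"
        using H unfolding Wm_def Lm_def SA_def by (simp add: matrix_mul_assoc)
      have emb: "\<alpha> * norm1 (Wm *v y) \<le> norm1 ((Lm ** Wm) *v y)" for y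
        using E2(3)[of \<omega>1 \<omega>2 y] inE unfolding E_def Wm_def Lm_def by (simp add: matrix_mul_assoc)
      have key: "norm12 (Wm ** X - A) \<le> (10*SA + 10*(3/2*SA + 1/real(Suc j)))/\<alpha> + (3/2*SA + 1/real(Suc j))" for j
      proof -
        have "(\<omega>1, \<omega>2) \<in> F j" using inE unfolding E_def by auto
        then obtain Xj where Xj: "Xj \<in> D" "phi1 Xj \<omega>1 < c j" "phi2 Xj (\<omega>1, \<omega>2) \<le> 10 * c j"
          unfolding F_def by auto
        have n1: "norm12 (Wm ** Xj - A) < c j" using Xj(2) unfolding phi1_def Wm_def .
        have n2: "norm12 (Lm ** (Wm ** Xj - A)) \<le> 10 * c j" using Xj(3) unfolding phi2_def Wm_def Lm_def by simp
        have T: "\<alpha> * norm12 (Wm ** (X - Xj)) \<le> norm12 (Lm ** Wm ** (X - Xj))"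
          by (rule transfer12) (rule emb)
        have eqM: "Lm ** Wm ** (X - Xj) = (Lm ** Wm ** X - Lm ** A) - Lm ** (Wm ** Xj - A)"
          by (simp add: matrix_diff_ldistrib matrix_mul_assoc)
        have "norm12 (Lm ** Wm ** (X - Xj)) \<le> 10 * SA + 10 * c j"
          unfolding eqM using norm12_triangle_diff[of "Lm ** Wm ** X - Lm ** A" "Lm ** (Wm ** Xj - A)"] H' n2 by linarith
        with T have T2: "norm12 (Wm ** (X - Xj)) \<le> (10 * SA + 10 * c j) / \<alpha>"
          using assms(2) by (simp add: field_simps mult.commute)
        have eqW: "Wm ** X - A = Wm ** (X - Xj) + (Wm ** Xj - A)"
          by (simp add: matrix_diff_ldistrib)
        have "norm12 (Wm ** X - A) \<le> norm12 (Wm ** (X - Xj)) + norm12 (Wm ** Xj - A)"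
          unfolding eqW by (rule norm12_triangle)
        with T2 n1 show ?thesis unfolding c_def by linarith
      qed
      have "norm12 (Wm ** X - A) \<le> (2 + 40/\<alpha>) * SA"
        by (rule final_bound[OF assms(2) SA0 key])
      then show ?thesis
        unfolding Wm_def SA_def .
    qed
    show "\<forall>(\<omega>1, \<omega>2)\<in>E. \<forall>X :: real^'d^'m.
              norm12 (L \<omega>1 \<omega>2 ** A ** transpose (S \<omega>1) ** X - L \<omega>1 \<omega>2 ** A)
                \<le> 10 * SubApx k A \<longrightarrow>
              norm12 (A ** transpose (S \<omega>1) ** X - A) \<le> (2 + 40 / \<alpha>) * SubApx k A"
      using main by blast
  qed
qed


end
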